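(* There exist a joint distribution $P$ of $(x,a,y)$ with two protected groups $a\in\{1,2\}$ and binary labels $y\in\{0,1\}$, a score function $\mathcal{R}$ that is Bayes-optimal for each protected group, i.e. $\mathcal{R}(x,a)=P(y=1\mid x,a)$, and a choice of bias measure $\mathcal{B}$ (demographic parity or equal opportunity) such that the post-processing method restricted to deterministic thresholds (described in the context), with loss equal to the misclassification rate, is not slack-consistent: there is an individual $(x,a)$ and slacks $0<\beta_1<\beta_2<\beta_3$ such that $f_{\beta_1}(x,a), f_{\beta_2}(x,a), f_{\beta_3}(x,a)$ are neither non-decreasing nor non-increasing.
   Context: Setting: individuals are pairs $(x,a)$ with features $x$ and group $a\in\{1,2\}$, label $y\in\{0,1\}$, distributed according to $P$. A classifier $f$ assigns each $(x,a)$ a prediction $f(x,a)\in\{0,1\}$ (more generally a probability in $[0,1]$). Demographic-parity bias: $\mathcal{B}(f)=E[f(x,a)\mid a=1]-E[f(x,a)\mid a=2]$. Equal-opportunity bias: $\mathcal{B}(f)=E[f(x,a)\mid a=1,y=1]-E[f(x,a)\mid a=2,y=1]$. Misclassification loss $\mathcal{L}(f)=P(f(x,a)\neq y)$. Post-processing with deterministic thresholds and slack $\beta>0$: a pair of thresholds $(t_1,t_2)$ defines the classifier $f(x,a)=\mathbb{1}[\mathcal{R}(x,a)\ge t_a]$; among all such pairs minimizing $\mathcal{L}$ subject to $|\mathcal{B}|\le\beta$, keep those with smallest $|\mathcal{B}|$, then those with lowest threshold for group 1 (equivalently, largest positive rate in group 1 being excluded—i.e. smallest $t_1$ in the sense of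 the normalized threshold ordering), then return the one with lowest threshold for group 2. The returned classifier is $f_\beta$. Slack-consistency: for every individual $(x,a)$, the map $\beta\mapsto f_\beta(x,a)$ is monotonic in $\beta>0$. *)

theory Defs
  imports "HOL-Probability.Probability"
begin

datatype bias_kind = DemParity | EqOpp

definition cprob :: "('x \<times> nat \<times> bool) pmf \<Rightarrow> ('x \<times> nat \<times> bool) set \<Rightarrow> ('x \<times> nat \<times> bool) set \<Rightarrow> real" where
  "cprob P A C = measure_pmf.prob P (A \<inter> C) / measure_pmf.prob P C"

definition bayes_optimal :: "('x \<times> nat \<times> bool) pmf \<Rightarrow> ('x \<Rightarrow> nat \<Rightarrow> real) \<Rightarrow> bool" where
  "bayes_optimal P R \<longleftrightarrow> (\<forall>x a y. (x, a, y) \<in> set_pmf P \<longrightarrow>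
      R x a = cprob P {(x', a', y'). y'} {(x', a', y'). x' = x \<and> a' = a})"

definition thr_clf :: "('x \<Rightarrow> nat \<Rightarrow> real) \<Rightarrow> real \<Rightarrow> real \<Rightarrow> 'x \<Rightarrow> nat \<Rightarrow> bool" where
  "thr_clf R t1 t2 x a = (if a = 1 then t1 \<le> R x a else t2 \<le> R x a)"

definition loss :: "('x \<times> nat \<times> bool) pmf \<Rightarrow> ('x \<Rightarrow> nat \<Rightarrow> bool) \<Rightarrow> real" where
  "loss P f = measure_pmf.prob P {(x, a, y). f x a \<noteq> y}"

definition bias :: "bias_kind \<Rightarrow> ('x \<times> nat \<times> bool) pmf \<Rightarrow> ('x \<Rightarrow> nat \<Rightarrow> bool) \<Rightarrow> real" where
  "bias k P f = (case k of
      DemParity \<Rightarrow> cprob P {(x, a, y). f x a} {(x, a, y). a = 1}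
                 - cprob P {(x, a, y). f x a} {(x, a, y). a = 2}
    | EqOpp \<Rightarrow> cprob P {(x, a, y). f x a} {(x, a, y). a = 1 \<and> y}
                 - cprob P {(x, a, y). f x a} {(x, a, y). a = 2 \<and> y})"

text \<open>Candidate thresholds for group a: the scores occurring in group a, plus the threshold 2
  (above every probability score, i.e. "predict 0 for everybody").  Every real threshold
  induces the same classifier as one of these, and the ordering "lower threshold" between
  distinct classifiers is the same as between these representatives.\<close>
definition cand :: "('x \<times> nat \<times> bool) pmf \<Rightarrow> ('x \<Rightarrow> nat \<Rightarrow> real) \<Rightarrow> nat \<Rightarrow> real set" where
  "cand P R a = {R x a | x y. (x, a, y) \<in> set_pmf P} \<union> {2}"

definition argmin_set :: "('b \<Rightarrow> real) \<Rightarrow> 'b set \<Rightarrow> 'b set" where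
  "argmin_set g S = {p \<in> S. \<forall>q \<in> S. g p \<le> g q}"

definition feasible :: "bias_kind \<Rightarrow> ('x \<times> nat \<times> bool) pmf \<Rightarrow> ('x \<Rightarrow> nat \<Rightarrow> real) \<Rightarrow> real \<Rightarrow> (real \<times> real) set" where
  "feasible k P R \<beta> = {(t1, t2). t1 \<in> cand P R 1 \<and> t2 \<in> cand P R 2 \<and>
       \<bar>bias k P (thr_clf R t1 t2)\<bar> \<le> \<beta>}"

definition selected :: "bias_kind \<Rightarrow> ('x \<times> nat \<times> bool) pmf \<Rightarrow> ('x \<Rightarrow> nat \<Rightarrow> real) \<Rightarrow> real \<Rightarrow> (real \<times> real) set" where
  "selected k P R \<beta> =
     argmin_set snd (argmin_set fst
       (argmin_set (\<lambda>(t1, t2). \<bar>bias k P (thr_clf R t1 t2)\<bar>)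
         (argmin_set (\<lambda>(t1, t2). loss P (thr_clf R t1 t2)) (feasible k P R \<beta>))))"

definition f_beta :: "bias_kind \<Rightarrow> ('x \<times> nat \<times> bool) pmf \<Rightarrow> ('x \<Rightarrow> nat \<Rightarrow> real) \<Rightarrow> real \<Rightarrow> 'x \<Rightarrow> nat \<Rightarrow> bool" where
  "f_beta k P R \<beta> = (let (t1, t2) = (THE p. p \<in> selected k P R \<beta>) in thr_clf R t1 t2)"

end

theory Submission
  imports Defs
begin

definition xs :: "((nat \<times> nat \<times> bool) \<times> real) list" where
 "xs = [((0,1,True),2/9), ((1,2,True),1/9), ((1,2,False),2/9), ((2,2,True),1/9), ((2,2,False),3/9)]"
definition PP :: "(nat \<times> nat \<times> bool) pmf" where "PP = pmf_of_list xs"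
definition RR :: "nat \<Rightarrow> nat \<Rightarrow> real" where "RR x a = (if x = 0 then 1 else if x = 1 then 1/3 else 1/4)"

lemma wf: "pmf_of_list_wf xs" by (simp add: pmf_of_list_wf_def xs_def)
lemma setP: "set_pmf PP = {(0,1,True),(1,2,True),(1,2,False),(2,2,True),(2,2,False)}"
  unfolding PP_def by (subst set_pmf_of_list_eq[OF wf]) (auto simp: xs_def)
lemma measP: "measure_pmf.prob PP A = sum_list (map snd (filter (\<lambda>x. fst x \<in> A) xs))"
  unfolding PP_def by (rule measure_pmf_of_list[OF wf])

lemma cand1: "cand PP RR 1 = {1,2}" unfolding cand_def setP by (auto simp: RR_def)
lemma cand2: "cand PP RR 2 = {1/3,1/4,2}" unfolding cand_def setP
  apply (auto simp: RR_def)
  apply (rule_tac x=2 in exI)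
  apply simp
  done

lemma bayes: "bayes_optimal PP RR"
  unfolding bayes_optimal_def setP cprob_def measP
  apply (intro allI impI)
  apply (elim insertE)
  apply (simp_all add: RR_def xs_def)
  done

lemma lossv: "loss PP (thr_clf RR t1 t2) =
   (if t1 \<le> 1 then 0 else 2/9) + (if t2 \<le> 1/3 then 2/9 else 1/9) + (if t2 \<le> 1/4 then 3/9 else 1/9)"
  unfolding loss_def measP by (simp add: xs_def thr_clf_def RR_def)

lemma biasv: "bias DemParity PP (thr_clf RR t1 t2) =
   (if t1 \<le> 1 then 1 else 0) - ((if t2 \<le> 1/3 then 3/7 else 0) + (if t2 \<le> 1/4 then 4/7 else 0))"
  unfolding bias_def cprob_def measP by (simp add: xs_def thr_clf_def RR_def)

lemma filt_ins: "{p \<in> insert a A. P p} = (if P a then insert a {p \<in> A. P p} else {p \<in> A. P p})"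
  by auto

lemma filt_empty: "{p \<in> {}. P p} = {}" by auto

lemma argmin_single: "argmin_set g {a} = {a}"
  unfolding argmin_set_def by auto

lemma argmin_unique:
  assumes "s \<in> S" "\<forall>q\<in>S. q \<noteq> s \<longrightarrow> g s < g q"
  shows "argmin_set g S = {s}"
  using assms unfolding argmin_set_def by force

lemma feas: "feasible DemParity PP RR b =
   {p \<in> {(1,1/4),(1,1/3),(1,2),(2,1/4),(2,1/3),(2,2)}. \<bar>bias DemParity PP (thr_clf RR (fst p) (snd p))\<bar> \<le> b}"
  unfolding feasible_def cand1 cand2 by auto

lemma f1: "f_beta DemParity PP RR (1/2) 1 2 = False"
proof -
  have F: "feasible DemParity PP RR (1/2) = {(1,1/4),(2,1/3),(2,2)}"
    unfolding feas
    by (simp only: filt_ins filt_empty biasv) simp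
  have S: "selected DemParity PP RR (1/2) = {(2,2)}"
    proof -
    have "argmin_set (\<lambda>(t1, t2). loss PP (thr_clf RR t1 t2)) (feasible DemParity PP RR (1/2)) = {(2,2)}"
      unfolding F by (rule argmin_unique) (simp_all add: lossv)
    then show ?thesis unfolding selected_def by (simp add: argmin_single)
  qed
  show ?thesis unfolding f_beta_def S by (simp add: thr_clf_def RR_def)
qed

lemma f2: "f_beta DemParity PP RR (3/5) 1 2 = True"
proof -
  have F: "feasible DemParity PP RR (3/5) = {(1,1/4),(1,1/3),(2,1/3),(2,2)}"
    unfolding feas
    by (simp only: filt_ins filt_empty biasv) simp
  have S: "selected DemParity PP RR (3/5) = {(1,1/3)}"
    proof -
    have "argmin_set (\<lambda>(t1, t2). loss PP (thr_clf RR t1 t2)) (feasible DemParity PP RR (3/5)) = {(1,1/3)}"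
      unfolding F by (rule argmin_unique) (simp_all add: lossv)
    then show ?thesis unfolding selected_def by (simp add: argmin_single)
  qed
  show ?thesis unfolding f_beta_def S by (simp add: thr_clf_def RR_def)
qed

lemma f3: "f_beta DemParity PP RR 1 1 2 = False"
proof -
  have F: "feasible DemParity PP RR 1 = {(1,1/4),(1,1/3),(1,2),(2,1/4),(2,1/3),(2,2)}"
    unfolding feas
    by (simp only: filt_ins filt_empty biasv) simp
  have S: "selected DemParity PP RR 1 = {(1,2)}"
    proof -
    have "argmin_set (\<lambda>(t1, t2). loss PP (thr_clf RR t1 t2)) (feasible DemParity PP RR 1) = {(1,2)}"
      unfolding F by (rule argmin_unique) (simp_all add: lossv)
    then show ?thesis unfolding selected_def by (simp add: argmin_single)
  qed
  show ?thesis unfolding f_beta_def S by (simp add: thr_clf_def RR_def)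
qed



theorem theorem2:
  shows "\<exists>(P :: (nat \<times> nat \<times> bool) pmf) (R :: nat \<Rightarrow> nat \<Rightarrow> real) (k :: bias_kind).
     finite (set_pmf P) \<and>
     set_pmf P \<subseteq> {(x, a, y). a \<in> {1, 2}} \<and>
     measure_pmf.prob P {(x, a, y). a = 1 \<and> y} > 0 \<and>
     measure_pmf.prob P {(x, a, y). a = 2 \<and> y} > 0 \<and>
     bayes_optimal P R \<and>
     (\<exists>x a y \<beta>1 \<beta>2 \<beta>3. (x, a, y) \<in> set_pmf P \<and> 0 < \<beta>1 \<and> \<beta>1 < \<beta>2 \<and> \<beta>2 < \<beta>3 \<and>
        (let v1 = of_bool (f_beta k P R \<beta>1 x a) :: real;
             v2 = of_bool (f_beta k P R \<beta>2 x a);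
             v3 = of_bool (f_beta k P R \<beta>3 x a)
         in \<not> (v1 \<le> v2 \<and> v2 \<le> v3) \<and> \<not> (v1 \<ge> v2 \<and> v2 \<ge> v3)))"
proof -
  have fin: "finite (set_pmf PP)" unfolding setP by simp
  have sub: "set_pmf PP \<subseteq> {(x, a, y). a \<in> {1, 2}}" unfolding setP by auto
  have p1: "measure_pmf.prob PP {(x, a, y). a = 1 \<and> y} > 0" unfolding measP by (simp add: xs_def)
  have p2: "measure_pmf.prob PP {(x, a, y). a = 2 \<and> y} > 0" unfolding measP by (simp add: xs_def)
  have m: "(1::nat, 2::nat, True) \<in> set_pmf PP" unfolding setP by simp
  show ?thesis
    apply (rule exI[of _ PP], rule exI[of _ RR], rule exI[of _ DemParity])
    apply (intro conjI fin sub p1 p2 bayes)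
    apply (rule exI[of _ 1], rule exI[of _ 2], rule exI[of _ True])
    apply (rule exI[of _ "1/2"], rule exI[of _ "3/5"], rule exI[of _ 1])
    using m f1 f2 f3 by (simp add: Let_def)
qed

end
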